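(* Let $\nu,a,b\in\mathbb{R}$ with $0<b+\nu<(a+\nu)/4$. Then the function $u_2\mapsto\lambda_2(a,u_2,b)-\lambda_3(a,u_2,b)$ has exactly one zero $u^*$ in the interval $b<u_2<a$, and this zero is simple. Moreover, $\lambda_2(a,u_2,b)-\lambda_3(a,u_2,b)$ is positive for $u^*<u_2<a$ and negative for $b<u_2<u^*$.
   Context: For $-\nu<u_3<u_2<u_1$ define $$I(u_1,u_2,u_3)=\int_{u_3}^{u_2}\frac{\eta+\nu}{\sqrt{(\eta+\nu)(u_1-\eta)(u_2-\eta)(\eta-u_3)}}\,d\eta,$$ and for $i=1,2,3$ $$\lambda_i=u_1+u_2+u_3+2\nu-\frac{I}{\partial I/\partial u_i}.$$ *)

theory Defs
  imports "HOL-Analysis.Analysis"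
begin

text \<open>The integral I(u1,u2,u3) (depending on the parameter nu), as a
  (Henstock--Kurzweil, here improper but absolutely convergent) integral over [u3,u2].\<close>
definition Iint :: "real \<Rightarrow> real \<Rightarrow> real \<Rightarrow> real \<Rightarrow> real" where
  "Iint \<nu> u1 u2 u3 = integral {u3..u2}
     (\<lambda>\<eta>. (\<eta> + \<nu>) / sqrt ((\<eta> + \<nu>) * (u1 - \<eta>) * (u2 - \<eta>) * (\<eta> - u3)))"

definition dI :: "nat \<Rightarrow> real \<Rightarrow> real \<Rightarrow> real \<Rightarrow> real \<Rightarrow> real" where
  "dI i \<nu> u1 u2 u3 =
     (if i = 1 then deriv (\<lambda>x. Iint \<nu> x u2 u3) u1
      else if i = 2 then deriv (\<lambda>x. Iint \<nu> u1 x u3) u2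
      else deriv (\<lambda>x. Iint \<nu> u1 u2 x) u3)"

definition lam :: "nat \<Rightarrow> real \<Rightarrow> real \<Rightarrow> real \<Rightarrow> real \<Rightarrow> real" where
  "lam i \<nu> u1 u2 u3 = u1 + u2 + u3 + 2 * \<nu> - Iint \<nu> u1 u2 u3 / dI i \<nu> u1 u2 u3"

end

theory Submission imports Defs begin

definition ef :: "real \<Rightarrow> real \<Rightarrow> real \<Rightarrow> real" where
  "ef X B t = B * (cos t)^2 + X * (sin t)^2"

definition Hf :: "real \<Rightarrow> real \<Rightarrow> real" where
  "Hf A x = A / (sqrt x * (A - x) * sqrt (A - x))"

definition H1 :: "real \<Rightarrow> real \<Rightarrow> real" where
  "H1 A x = A * (4 * x - A) / (2 * (x * sqrt x) * ((A - x)^2 * sqrt (A - x)))"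

definition F0 :: "real \<Rightarrow> real \<Rightarrow> real" where
  "F0 A x = 2 * sqrt x / sqrt (A - x)"

lemma ef_alt: "ef X B t = B + (X - B) * (sin t)^2"
proof -
  have "B * (cos t)^2 + B*(sin t)^2 = B"
    by (metis mult.right_neutral distrib_left sin_cos_squared_add add.commute)
  then show ?thesis unfolding ef_def by (simp add: algebra_simps)
qed

lemma ef_bounds:
  assumes "0 < B" "B < A" "0 < X" "X < A"
  shows "0 < ef X B t" "ef X B t < A"
proof -
  let ?s = "(sin t)^2"
  have s: "0 \<le> ?s" "?s \<le> 1" by (auto simp: abs_square_le_1)
  have e: "ef X B t = B * (1 - ?s) + X * ?s" using ef_alt[of X B t] by (simp add: algebra_simps)
  have "B * (1 - ?s) + X * ?s \<ge> min B X * (1 - ?s) + min B X * ?s"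
    using s by (intro add_mono mult_right_mono) auto
  moreover have "B * (1 - ?s) + X * ?s \<le> max B X * (1 - ?s) + max B X * ?s"
    using s by (intro add_mono mult_right_mono) auto
  ultimately show "0 < ef X B t" "ef X B t < A" using assms e
    by (auto simp: algebra_simps)
qed

lemma sqrt_chain:
  assumes "(f has_real_derivative D) (at x)" "f x > 0"
  shows "((\<lambda>x. sqrt (f x)) has_real_derivative D / (2 * sqrt (f x))) (at x)"
proof -
  have "((\<lambda>x. sqrt (f x)) has_real_derivative inverse (sqrt (f x)) / 2 * D) (at x)"
    by (rule DERIV_chain2[OF DERIV_real_sqrt[OF assms(2)] assms(1)])
  then show ?thesis by (simp add: field_simps)
qed

lemma F0_deriv:
  assumes "0 < x" "x < A"
  shows "(F0 A has_real_derivative Hf A x) (at x)"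
proof -
  have pos: "sqrt x > 0" "sqrt (A - x) > 0" using assms by auto
  have sx: "sqrt x * sqrt x = x" "sqrt (A-x) * sqrt (A-x) = A - x" using assms by auto
  have d1: "((\<lambda>x. sqrt x) has_real_derivative 1 / (2 * sqrt x)) (at x)"
    using sqrt_chain[of "\<lambda>x. x" 1 x] assms by simp
  have d3: "((\<lambda>x. A - x) has_real_derivative -1) (at x)" by (auto intro!: derivative_eq_intros)
  have d2: "((\<lambda>x. sqrt (A - x)) has_real_derivative -1 / (2 * sqrt (A - x))) (at x)"
    using sqrt_chain[OF d3] assms by simp
  have "((\<lambda>x. 2 * sqrt x / sqrt (A - x)) has_real_derivative
     ((2 * (1 / (2 * sqrt x))) * sqrt (A - x) - 2 * sqrt x * (-1 / (2 * sqrt (A - x)))) / (sqrt (A - x) * sqrt (A - x))) (at x)"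
    using pos by (intro DERIV_divide DERIV_cmult d1 d2) auto
  moreover have "((2 * (1 / (2 * sqrt x))) * sqrt (A - x) - 2 * sqrt x * (-1 / (2 * sqrt (A - x)))) / (sqrt (A - x) * sqrt (A - x)) = Hf A x"
    using pos unfolding Hf_def
    by (simp add: field_simps sx)
  ultimately show ?thesis unfolding F0_def by simp
qed

lemma Hf_deriv:
  assumes "0 < x" "x < A"
  shows "(Hf A has_real_derivative H1 A x) (at x)"
proof -
  have pos: "sqrt x > 0" "sqrt (A - x) > 0" using assms by auto
  have sx: "sqrt x * sqrt x = x" "sqrt (A-x) * sqrt (A-x) = A - x" using assms by auto
  have d1: "((\<lambda>x. sqrt x) has_real_derivative 1 / (2 * sqrt x)) (at x)"
    using sqrt_chain[of "\<lambda>x. x" 1 x] assms by simp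
  have d3: "((\<lambda>x. A - x) has_real_derivative -1) (at x)" by (auto intro!: derivative_eq_intros)
  have d2: "((\<lambda>x. sqrt (A - x)) has_real_derivative -1 / (2 * sqrt (A - x))) (at x)"
    using sqrt_chain[OF d3] assms by simp
  note d4 = DERIV_mult'[OF d1 d3]
  note d5 = DERIV_mult'[OF d4 d2]
  have ne: "sqrt x * (A - x) * sqrt (A - x) \<noteq> 0" using pos assms by simp
  note d6 = DERIV_divide[OF DERIV_const[of A] d5 ne]
  show ?thesis unfolding Hf_def
  proof (rule DERIV_cong[OF d6])
    have hq: "A - x = sqrt (A - x) * sqrt (A - x)" and hp: "x = sqrt x * sqrt x" using assms by auto
    have hA: "A = sqrt x * sqrt x + sqrt (A - x) * sqrt (A - x)" using assms by simp
    have alg: "\<And>p q::real. p > 0 \<Longrightarrow> q > 0 \<Longrightarrow>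
      (0 * (p * (q*q) * q) - (p*p+q*q) * (p * (q*q) * (- 1 / (2 * q)) + (p * - 1 + 1 / (2 * p) * (q*q)) * q)) /
      (p * (q*q) * q * (p * (q*q) * q)) = (p*p+q*q) * (4 * (p*p) - (p*p+q*q)) / (2 * ((p*p) * p) * ((q*q)^2 * q))"
      by (simp add: field_simps power2_eq_square)
    show "(0 * (sqrt x * (A - x) * sqrt (A - x)) -
     A * (sqrt x * (A - x) * (- 1 / (2 * sqrt (A - x))) + (sqrt x * - 1 + 1 / (2 * sqrt x) * (A - x)) * sqrt (A - x))) /
    (sqrt x * (A - x) * sqrt (A - x) * (sqrt x * (A - x) * sqrt (A - x))) = H1 A x"
      unfolding H1_def using alg[OF pos] by (simp only: hq[symmetric] hp[symmetric] hA[symmetric]) simp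
  qed
qed


lemma cont_open_deriv:
  assumes "\<And>x. 0<x \<Longrightarrow> x<A \<Longrightarrow> (F has_real_derivative F' x) (at x)"
  shows "continuous_on {0<..<A} F"
  using assms by (intro continuous_at_imp_continuous_on ballI DERIV_isCont) auto

lemma cont_comp_ef:
  assumes cF: "continuous_on {0<..<A} F" and "0 < B" "B < A"
  shows "continuous_on ({0<..<A} \<times> {0..pi/2}) (\<lambda>(x,t). F (ef x B t))"
proof -
  have "continuous_on ({0<..<A} \<times> {0..pi/2}) (\<lambda>(x,t). ef x B t)"
    unfolding ef_def by (auto simp: case_prod_beta intro!: continuous_intros)
  moreover have "(\<lambda>(x,t). ef x B t) ` ({0<..<A} \<times> {0..pi/2}) \<subseteq> {0<..<A}"
    using ef_bounds assms by auto
  ultimately show ?thesis using continuous_on_compose2[OF cF] by (simp add: case_prod_beta)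
qed

lemma cont_comp_efB:
  assumes cF: "continuous_on {0<..<A} F" and "0 < X" "X < A"
  shows "continuous_on ({0<..<A} \<times> {0..pi/2}) (\<lambda>(x,t). F (ef X x t))"
proof -
  have "continuous_on ({0<..<A} \<times> {0..pi/2}) (\<lambda>(x,t). ef X x t)"
    unfolding ef_def by (auto simp: case_prod_beta intro!: continuous_intros)
  moreover have "(\<lambda>(x,t). ef X x t) ` ({0<..<A} \<times> {0..pi/2}) \<subseteq> {0<..<A}"
    using ef_bounds assms by auto
  ultimately show ?thesis using continuous_on_compose2[OF cF] by (simp add: case_prod_beta)
qed

lemma cont_t_ef:
  assumes cF: "continuous_on {0<..<A} F" and "0 < B" "B < A" "0 < X" "X < A"
  shows "continuous_on {0..pi/2} (\<lambda>t. F (ef X B t))"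
proof -
  have "continuous_on {0..pi/2} (\<lambda>t. ef X B t)"
    unfolding ef_def by (auto intro!: continuous_intros)
  moreover have "(\<lambda>t. ef X B t) ` {0..pi/2} \<subseteq> {0<..<A}"
    using ef_bounds assms by auto
  ultimately show ?thesis using continuous_on_compose2[OF cF] by simp
qed

lemma leib_X:
  fixes F F' w :: "real \<Rightarrow> real"
  assumes dF: "\<And>x. 0<x \<Longrightarrow> x<A \<Longrightarrow> (F has_real_derivative F' x) (at x)"
    and cF': "continuous_on {0<..<A} F'"
    and cw: "continuous_on {0..pi/2} w"
    and B: "0<B" "B<A" and X: "0<X" "X<A"
  shows "((\<lambda>X. integral {0..pi/2} (\<lambda>t. w t * F (ef X B t))) has_real_derivative
           integral {0..pi/2} (\<lambda>t. w t * (sin t)^2 * F' (ef X B t))) (at X)"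
proof -
  have cF: "continuous_on {0<..<A} F" by (rule cont_open_deriv[OF dF])
  have "((\<lambda>X. integral (cbox 0 (pi/2)) (\<lambda>t. w t * F (ef X B t))) has_real_derivative
           integral (cbox 0 (pi/2)) (\<lambda>t. w t * (sin t)^2 * F' (ef X B t))) (at X within {0<..<A})"
  proof (rule leibniz_rule_field_derivative)
    fix x t assume x: "x \<in> {0<..<A}" and t: "t \<in> cbox 0 (pi/2)"
    have e: "0 < ef x B t" "ef x B t < A" using ef_bounds[of B A x t] x B by auto
    have "((\<lambda>x. ef x B t) has_real_derivative (sin t)^2) (at x)"
      unfolding ef_def by (auto intro!: derivative_eq_intros)
    from DERIV_chain2[OF dF[OF e] this]
    have "((\<lambda>x. F (ef x B t)) has_real_derivative F' (ef x B t) * (sin t)^2) (at x)" .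
    from DERIV_cmult[OF this, of "w t"]
    show "((\<lambda>x. w t * F (ef x B t)) has_real_derivative w t * (sin t)^2 * F' (ef x B t)) (at x within {0<..<A})"
      by (auto simp: mult_ac intro: has_field_derivative_at_within)
  next
    fix x assume x: "x \<in> {0<..<A}"
    show "(\<lambda>t. w t * F (ef x B t)) integrable_on cbox 0 (pi/2)"
      using x B unfolding cbox_interval
      by (intro integrable_continuous_interval continuous_on_mult cw cont_t_ef[OF cF]) auto
  next
    show "continuous_on ({0<..<A} \<times> cbox 0 (pi/2)) (\<lambda>(x, t). w t * (sin t)^2 * F' (ef x B t))"
    proof -
      have c1: "continuous_on ({0<..<A} \<times> {0..pi/2}) (\<lambda>(x, t). w t * (sin t)^2)"
        using cw by (auto simp: case_prod_beta intro!: continuous_intros continuous_on_compose2[OF cw])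
      show ?thesis using continuous_on_mult[OF c1 cont_comp_ef[OF cF' B]]
        by (simp add: case_prod_beta)
    qed
  qed (use X in auto)
  then show ?thesis by (simp add: at_within_open[of X "{0<..<A}"] X)
qed

lemma leib_B:
  fixes F F' w :: "real \<Rightarrow> real"
  assumes dF: "\<And>x. 0<x \<Longrightarrow> x<A \<Longrightarrow> (F has_real_derivative F' x) (at x)"
    and cF': "continuous_on {0<..<A} F'"
    and cw: "continuous_on {0..pi/2} w"
    and B: "0<B" "B<A" and X: "0<X" "X<A"
  shows "((\<lambda>B. integral {0..pi/2} (\<lambda>t. w t * F (ef X B t))) has_real_derivative
           integral {0..pi/2} (\<lambda>t. w t * (cos t)^2 * F' (ef X B t))) (at B)"
proof -
  have cF: "continuous_on {0<..<A} F" by (rule cont_open_deriv[OF dF])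
  have "((\<lambda>B. integral (cbox 0 (pi/2)) (\<lambda>t. w t * F (ef X B t))) has_real_derivative
           integral (cbox 0 (pi/2)) (\<lambda>t. w t * (cos t)^2 * F' (ef X B t))) (at B within {0<..<A})"
  proof (rule leibniz_rule_field_derivative)
    fix x t assume x: "x \<in> {0<..<A}" and t: "t \<in> cbox 0 (pi/2)"
    have e: "0 < ef X x t" "ef X x t < A" using ef_bounds[of x A X t] x X by auto
    have "((\<lambda>x. ef X x t) has_real_derivative (cos t)^2) (at x)"
      unfolding ef_def by (auto intro!: derivative_eq_intros)
    from DERIV_chain2[OF dF[OF e] this]
    have "((\<lambda>x. F (ef X x t)) has_real_derivative F' (ef X x t) * (cos t)^2) (at x)" .
    from DERIV_cmult[OF this, of "w t"]
    show "((\<lambda>x. w t * F (ef X x t)) has_real_derivative w t * (cos t)^2 * F' (ef X x t)) (at x within {0<..<A})"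
      by (auto simp: mult_ac intro: has_field_derivative_at_within)
  next
    fix x assume x: "x \<in> {0<..<A}"
    show "(\<lambda>t. w t * F (ef X x t)) integrable_on cbox 0 (pi/2)"
      using x X unfolding cbox_interval
      by (intro integrable_continuous_interval continuous_on_mult cw cont_t_ef[OF cF]) auto
  next
    show "continuous_on ({0<..<A} \<times> cbox 0 (pi/2)) (\<lambda>(x, t). w t * (cos t)^2 * F' (ef X x t))"
    proof -
      have c1: "continuous_on ({0<..<A} \<times> {0..pi/2}) (\<lambda>(x, t). w t * (cos t)^2)"
        using cw by (auto simp: case_prod_beta intro!: continuous_intros continuous_on_compose2[OF cw])
      show ?thesis using continuous_on_mult[OF c1 cont_comp_efB[OF cF' X]]
        by (simp add: case_prod_beta)
    qed
  qed (use B in auto)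
  then show ?thesis by (simp add: at_within_open[of B "{0<..<A}"] B)
qed


lemma F0_cont: "continuous_on {0<..<A} (F0 A)"
  by (rule cont_open_deriv[OF F0_deriv]) auto

definition J :: "real \<Rightarrow> real \<Rightarrow> real \<Rightarrow> real" where
  "J A X B = integral {0..pi/2} (\<lambda>t. F0 A (ef X B t))"

lemma pointwise_cov:
  assumes "0 < b + \<nu>" "b < u" "u < a" "0 < t" "t < pi/2"
  shows "\<bar>(u - b) * (2 * sin t * cos t)\<bar> *
     ((b + (u - b) * (sin t)^2 + \<nu>) / sqrt ((b + (u - b) * (sin t)^2 + \<nu>) * (a - (b + (u - b) * (sin t)^2))
        * (u - (b + (u - b) * (sin t)^2)) * ((b + (u - b) * (sin t)^2) - b)))
     = F0 (a + \<nu>) (ef (u + \<nu>) (b + \<nu>) t)"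
proof -
  define s where "s = sin t"
  define c where "c = cos t"
  have s0: "s > 0" unfolding s_def using assms by (intro sin_gt_zero) auto
  have c0: "c > 0" unfolding c_def using assms by (intro cos_gt_zero) auto
  have sc: "s^2 + c^2 = 1" unfolding s_def c_def by simp
  have s1: "s^2 < 1" using sc c0 by (smt (verit) zero_less_power)
  define p where "p = b + (u - b) * s^2 + \<nu>"
  define q where "q = a - (b + (u - b) * s^2)"
  have p0: "p > 0" unfolding p_def using assms s0 by (smt (verit) mult_nonneg_nonneg zero_le_power2)
  have "(u - b) * s^2 < (u - b) * 1" using s1 assms by (intro mult_strict_left_mono) auto
  then have "(u - b) * s^2 < u - b" by simp
  then have q0: "q > 0" unfolding q_def using assms by argo
  have e1: "u - (b + (u - b) * s^2) = (u - b) * c^2" proof -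
    have h: "c^2 = 1 - s^2" using sc by simp
    show ?thesis unfolding h by (simp add: algebra_simps)
  qed
  have e2: "(b + (u - b) * s^2) - b = (u - b) * s^2" by simp
  have prod: "p * q * ((u - b) * c^2) * ((u - b) * s^2) = (sqrt p * sqrt q * (u - b) * s * c)^2"
    using p0 q0 by (simp add: power_mult_distrib power2_eq_square algebra_simps)
  have sq: "sqrt (p * q * ((u - b) * c^2) * ((u - b) * s^2)) = sqrt p * sqrt q * (u - b) * s * c"
    unfolding prod using p0 q0 s0 c0 assms by (intro real_sqrt_abs[THEN trans]) auto
  have ef: "ef (u + \<nu>) (b + \<nu>) t = p" unfolding ef_alt p_def s_def by (simp add: algebra_simps)
  have aq: "a + \<nu> - p = q" unfolding p_def q_def by simp
  have abs: "\<bar>(u - b) * (2 * s * c)\<bar> = (u - b) * (2 * s * c)" using assms s0 c0 by simp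
  have key: "\<And>d s c rp rq::real. d>0 \<Longrightarrow> s>0 \<Longrightarrow> c>0 \<Longrightarrow> rp>0 \<Longrightarrow> rq>0 \<Longrightarrow>
     d * (2 * s * c) * ((rp * rp) / (rp * rq * d * s * c)) = 2 * rp / rq" by (simp add: field_simps)
  have pp: "sqrt p * sqrt p = p" using p0 by simp
  have "\<bar>(u - b) * (2 * s * c)\<bar> * (p / sqrt (p * q * ((u - b) * c^2) * ((u - b) * s^2)))
        = 2 * sqrt p / sqrt q"
    unfolding abs sq using key[of "u-b" s c "sqrt p" "sqrt q"] p0 q0 s0 c0 assms pp by simp
  then show ?thesis
    unfolding F0_def ef aq using e1 e2 unfolding p_def[symmetric] q_def[symmetric] s_def c_def
    by (simp add: p_def q_def s_def c_def)
qed


lemma image_g: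
  assumes "b < u"
  shows "(\<lambda>t. b + (u - b) * (sin t)^2) ` {0<..<pi/2} = {b<..<u}"
proof
  show "(\<lambda>t. b + (u - b) * (sin t)^2) ` {0<..<pi/2} \<subseteq> {b<..<u}"
  proof
    fix y assume "y \<in> (\<lambda>t. b + (u - b) * (sin t)^2) ` {0<..<pi/2}"
    then obtain t where t: "0 < t" "t < pi/2" and y: "y = b + (u - b) * (sin t)^2" by auto
    have s0: "sin t > 0" using t by (intro sin_gt_zero) auto
    have c0: "cos t > 0" using t by (intro cos_gt_zero) auto
    have "(sin t)^2 < 1" using c0 sin_cos_squared_add[of t]
      by (smt (verit) zero_less_power)
    then have "(u - b) * (sin t)^2 < (u - b) * 1" using assms by (intro mult_strict_left_mono) auto
    moreover have "(u - b) * (sin t)^2 > 0" using s0 assms by simp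
    ultimately show "y \<in> {b<..<u}" using y by simp
  qed
next
  show "{b<..<u} \<subseteq> (\<lambda>t. b + (u - b) * (sin t)^2) ` {0<..<pi/2}"
  proof
    fix y assume y: "y \<in> {b<..<u}"
    define r where "r = (y - b) / (u - b)"
    have r: "0 < r" "r < 1" using y assms unfolding r_def by (auto simp: field_simps)
    define t where "t = arcsin (sqrt r)"
    have sr: "0 < sqrt r" "sqrt r < 1" using r by auto
    have "arcsin 0 < arcsin (sqrt r)" using sr by (subst arcsin_less_mono) auto
    then have t0: "0 < t" unfolding t_def by simp
    have "arcsin (sqrt r) < arcsin 1" using sr by (subst arcsin_less_mono) auto
    then have t1: "t < pi/2" unfolding t_def by simp
    have "sin t = sqrt r" unfolding t_def using sr by (intro sin_arcsin) linarith+
    then have "(sin t)^2 = r" using r by simp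
    then have "y = b + (u - b) * (sin t)^2" unfolding r_def using assms by simp
    then show "y \<in> (\<lambda>t. b + (u - b) * (sin t)^2) ` {0<..<pi/2}" using t0 t1 by auto
  qed
qed

lemma inj_g:
  assumes "b < u"
  shows "inj_on (\<lambda>t. b + (u - b) * (sin t)^2) {0<..<pi/2}"
proof (rule inj_onI)
  fix x y assume x: "x \<in> {0<..<pi/2}" and y: "y \<in> {0<..<pi/2}"
    and e: "b + (u - b) * (sin x)^2 = b + (u - b) * (sin y)^2"
  have "(sin x)^2 = (sin y)^2" using e assms by simp
  moreover have "sin x > 0" "sin y > 0" using x y by (auto intro!: sin_gt_zero)
  ultimately have "sin x = sin y" by (simp add: power2_eq_iff)
  then have "arcsin (sin x) = arcsin (sin y)" by simp
  then show "x = y" using x y by (simp add: arcsin_sin)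
qed

lemma Iint_eq:
  assumes "0 < b + \<nu>" "b < u" "u < a"
  shows "Iint \<nu> a u b = J (a + \<nu>) (u + \<nu>) (b + \<nu>)"
proof -
  define g where "g = (\<lambda>t. b + (u - b) * (sin t)^2)"
  define g' where "g' = (\<lambda>t. (u - b) * (2 * sin t * cos t))"
  define f where "f = (\<lambda>\<eta>. (\<eta> + \<nu>) / sqrt ((\<eta> + \<nu>) * (a - \<eta>) * (u - \<eta>) * (\<eta> - b)))"
  define h where "h = (\<lambda>t. F0 (a + \<nu>) (ef (u + \<nu>) (b + \<nu>) t))"
  let ?S = "{0<..<pi/2::real}"
  have ch: "continuous_on {0..pi/2} h" unfolding h_def
    using assms by (intro cont_t_ef[where A="a+\<nu>"] F0_cont) auto
  have eq: "\<bar>g' t\<bar> * f (g t) = h t" if "t \<in> ?S" for t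
    using pointwise_cov[of b \<nu> u a t] assms that unfolding g_def g'_def f_def h_def by auto
  have "h absolutely_integrable_on {0..pi/2}" using ch by (rule absolutely_integrable_continuous_real)
  then have hS: "h absolutely_integrable_on ?S"
    using absolutely_integrable_on_open_interval[where f=h and a=0 and b="pi/2"] by simp
  have "(\<lambda>t. \<bar>g' t\<bar> * f (g t)) absolutely_integrable_on ?S"
    by (rule absolutely_integrable_spike[OF hS negligible_empty]) (use eq in auto)
  moreover have "integral ?S (\<lambda>t. \<bar>g' t\<bar> * f (g t)) = J (a + \<nu>) (u + \<nu>) (b + \<nu>)"
  proof -
    have "integral ?S (\<lambda>t. \<bar>g' t\<bar> * f (g t)) = integral ?S h"
      by (rule integral_cong) (use eq in auto)
    also have "\<dots> = integral {0..pi/2} h" by (simp add: integral_open_interval_real)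
    finally show ?thesis unfolding J_def h_def by simp
  qed
  moreover have der: "(g has_field_derivative g' t) (at t within ?S)" if "t \<in> ?S" for t
    unfolding g_def g'_def by (auto intro!: derivative_eq_intros simp: power2_eq_square)
  ultimately have "f absolutely_integrable_on (g ` ?S) \<and> integral (g ` ?S) f = J (a + \<nu>) (u + \<nu>) (b + \<nu>)"
    using has_absolute_integral_change_of_variables_1'[of ?S g g' f "J (a + \<nu>) (u + \<nu>) (b + \<nu>)"]
      inj_g[OF assms(2)] unfolding g_def[symmetric] by auto
  then have "integral {b<..<u} f = J (a + \<nu>) (u + \<nu>) (b + \<nu>)"
    using image_g[OF assms(2)] unfolding g_def by simp
  then show ?thesis unfolding Iint_def f_def
    by (simp add: integral_open_interval_real)
qed


lemma Hf_cont: "continuous_on {0<..<A} (Hf A)"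
  by (rule cont_open_deriv[OF Hf_deriv]) auto

lemma H1_cont: "continuous_on {0<..<A} (H1 A)"
  unfolding H1_def by (intro continuous_intros) auto

definition P2 :: "real \<Rightarrow> real \<Rightarrow> real \<Rightarrow> real" where
  "P2 A X B = integral {0..pi/2} (\<lambda>t. (sin t)^2 * Hf A (ef X B t))"
definition P3 :: "real \<Rightarrow> real \<Rightarrow> real \<Rightarrow> real" where
  "P3 A X B = integral {0..pi/2} (\<lambda>t. (cos t)^2 * Hf A (ef X B t))"
definition R2 :: "real \<Rightarrow> real \<Rightarrow> real \<Rightarrow> real" where
  "R2 A X B = integral {0..pi/2} (\<lambda>t. (sin t)^2 * (sin t)^2 * H1 A (ef X B t))"
definition R3 :: "real \<Rightarrow> real \<Rightarrow> real \<Rightarrow> real" where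
  "R3 A X B = integral {0..pi/2} (\<lambda>t. (cos t)^2 * (sin t)^2 * H1 A (ef X B t))"

lemma J_dX:
  assumes "0<B" "B<A" "0<X" "X<A"
  shows "((\<lambda>X. J A X B) has_real_derivative P2 A X B) (at X)"
  using leib_X[of A "F0 A" "Hf A" "\<lambda>t. 1" B X] assms F0_deriv Hf_cont
  unfolding J_def P2_def by simp

lemma J_dB:
  assumes "0<B" "B<A" "0<X" "X<A"
  shows "((\<lambda>B. J A X B) has_real_derivative P3 A X B) (at B)"
  using leib_B[of A "F0 A" "Hf A" "\<lambda>t. 1" B X] assms F0_deriv Hf_cont
  unfolding J_def P3_def by simp

lemma P2_dX:
  assumes "0<B" "B<A" "0<X" "X<A"
  shows "((\<lambda>X. P2 A X B) has_real_derivative R2 A X B) (at X)"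
  using leib_X[of A "Hf A" "H1 A" "\<lambda>t. (sin t)^2" B X] assms Hf_deriv H1_cont
  unfolding R2_def P2_def by (simp add: continuous_intros)

lemma P3_dX:
  assumes "0<B" "B<A" "0<X" "X<A"
  shows "((\<lambda>X. P3 A X B) has_real_derivative R3 A X B) (at X)"
  using leib_X[of A "Hf A" "H1 A" "\<lambda>t. (cos t)^2" B X] assms Hf_deriv H1_cont
  unfolding R3_def P3_def by (simp add: continuous_intros)

lemma dI2_eq:
  assumes "0 < b + \<nu>" "b < u" "u < a"
  shows "dI 2 \<nu> a u b = P2 (a + \<nu>) (u + \<nu>) (b + \<nu>)"
proof -
  have d: "((\<lambda>x. J (a + \<nu>) (x + \<nu>) (b + \<nu>)) has_real_derivative P2 (a + \<nu>) (u + \<nu>) (b + \<nu>)) (at u)"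
  proof -
    have j: "((\<lambda>X. J (a + \<nu>) X (b + \<nu>)) has_real_derivative P2 (a + \<nu>) (u + \<nu>) (b + \<nu>)) (at (u + \<nu>))"
      using J_dX[of "b + \<nu>" "a + \<nu>" "u + \<nu>"] assms by simp
    have l: "((\<lambda>x. x + \<nu>) has_real_derivative 1) (at u)" by (auto intro!: derivative_eq_intros)
    show ?thesis using DERIV_chain2[OF j l] by simp
  qed
  have "((\<lambda>x. Iint \<nu> a x b) has_real_derivative P2 (a + \<nu>) (u + \<nu>) (b + \<nu>)) (at u)"
    by (rule has_field_derivative_transform_within_open[OF d, of "{b<..<a}"])
       (use assms in \<open>auto simp: Iint_eq\<close>)
  then show ?thesis unfolding dI_def by (simp add: DERIV_imp_deriv)
qed

lemma dI3_eq:
  assumes "0 < b + \<nu>" "b < u" "u < a"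
  shows "dI 3 \<nu> a u b = P3 (a + \<nu>) (u + \<nu>) (b + \<nu>)"
proof -
  have d: "((\<lambda>x. J (a + \<nu>) (u + \<nu>) (x + \<nu>)) has_real_derivative P3 (a + \<nu>) (u + \<nu>) (b + \<nu>)) (at b)"
  proof -
    have j: "((\<lambda>B. J (a + \<nu>) (u + \<nu>) B) has_real_derivative P3 (a + \<nu>) (u + \<nu>) (b + \<nu>)) (at (b + \<nu>))"
      using J_dB[of "b + \<nu>" "a + \<nu>" "u + \<nu>"] assms by simp
    have l: "((\<lambda>x. x + \<nu>) has_real_derivative 1) (at b)" by (auto intro!: derivative_eq_intros)
    show ?thesis using DERIV_chain2[OF j l] by simp
  qed
  have "((\<lambda>x. Iint \<nu> a u x) has_real_derivative P3 (a + \<nu>) (u + \<nu>) (b + \<nu>)) (at b)"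
    by (rule has_field_derivative_transform_within_open[OF d, of "{-\<nu><..<u}"])
       (use assms in \<open>auto simp: Iint_eq\<close>)
  then show ?thesis unfolding dI_def by (simp add: DERIV_imp_deriv)
qed

lemma int_pos:
  fixes f :: "real \<Rightarrow> real"
  assumes c: "continuous_on {a..b} f" and nn: "\<And>x. x\<in>{a..b} \<Longrightarrow> 0 \<le> f x"
    and tt: "tt \<in> {a..b}" "f tt > 0" and ab: "a < b"
  shows "integral {a..b} f > 0"
proof -
  have i: "f integrable_on {a..b}" using c by (rule integrable_continuous_interval)
  have "integral {a..b} f \<ge> 0" using i nn by (rule integral_nonneg)
  moreover have "integral {a..b} f \<noteq> 0"
  proof
    assume "integral {a..b} f = 0"
    then have "(f has_integral 0) (cbox a b)" using i by (metis cbox_interval integrable_integral)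
    then have "f tt = 0"
      using has_integral_0_cbox_imp_0[of a b f tt] c nn tt ab by auto
    then show False using tt by simp
  qed
  ultimately show ?thesis by simp
qed

lemma Hf_pos: "0 < x \<Longrightarrow> x < A \<Longrightarrow> Hf A x > 0"
  unfolding Hf_def by simp

lemma F0_pos: "0 < x \<Longrightarrow> x < A \<Longrightarrow> F0 A x > 0"
  unfolding F0_def by simp

lemma sincos_pi4: "sin (pi/4) > 0" "cos (pi/4) > 0"
  by (auto intro!: sin_gt_zero cos_gt_zero)

lemma J_pos:
  assumes "0<B" "B<A" "0<X" "X<A"
  shows "J A X B > 0"
  unfolding J_def using assms ef_bounds[OF assms]
  by (intro int_pos[where tt="pi/4"] cont_t_ef[where A=A] F0_cont less_imp_le F0_pos) auto

lemma P2_pos: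
  assumes "0<B" "B<A" "0<X" "X<A"
  shows "P2 A X B > 0"
  unfolding P2_def
proof (rule int_pos[where tt="pi/4"])
  show "continuous_on {0..pi/2} (\<lambda>t. (sin t)^2 * Hf A (ef X B t))"
    using assms by (intro continuous_on_mult cont_t_ef[where A=A] Hf_cont continuous_intros) auto
  show "0 \<le> (sin t)^2 * Hf A (ef X B t)" for t
    using Hf_pos[OF ef_bounds[OF assms, of t]] by simp
  show "0 < (sin (pi/4))^2 * Hf A (ef X B (pi/4))"
    using ef_bounds[OF assms, of "pi/4"] sincos_pi4 by (intro mult_pos_pos Hf_pos) auto
qed auto

lemma P3_pos:
  assumes "0<B" "B<A" "0<X" "X<A"
  shows "P3 A X B > 0"
  unfolding P3_def
proof (rule int_pos[where tt="pi/4"])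
  show "continuous_on {0..pi/2} (\<lambda>t. (cos t)^2 * Hf A (ef X B t))"
    using assms by (intro continuous_on_mult cont_t_ef[where A=A] Hf_cont continuous_intros) auto
  show "0 \<le> (cos t)^2 * Hf A (ef X B t)" for t
    using Hf_pos[OF ef_bounds[OF assms, of t]] by simp
  show "0 < (cos (pi/4))^2 * Hf A (ef X B (pi/4))"
    using ef_bounds[OF assms, of "pi/4"] sincos_pi4 by (intro mult_pos_pos Hf_pos) auto
qed auto


definition Q :: "real \<Rightarrow> real \<Rightarrow> real \<Rightarrow> real" where
  "Q A X B = integral {0..pi/2} (\<lambda>t. 2 * (sin t)^2 * (cos t)^2 * H1 A (ef X B t))"

lemma ef_dt: "((\<lambda>t. ef X B t) has_real_derivative (X - B) * (2 * sin t * cos t)) (at t)"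
  unfolding ef_def by (auto intro!: derivative_eq_intros simp: algebra_simps power2_eq_square)

lemma cont_w_ef:
  fixes F w :: "real \<Rightarrow> real"
  assumes "continuous_on {0<..<A} F" "continuous_on {0..pi/2} w"
    "0<B" "B<A" "0<X" "X<A"
  shows "continuous_on {0..pi/2} (\<lambda>t. w t * F (ef X B t))"
  by (rule continuous_on_mult[OF assms(2) cont_t_ef[OF assms(1) assms(3-6)]])

lemma P_diff:
  assumes ab: "0<B" "B<A" "0<X" "X<A"
  shows "P2 A X B - P3 A X B = (X - B) * Q A X B"
proof -
  define \<Phi> where "\<Phi> = (\<lambda>t. sin t * cos t * Hf A (ef X B t))"
  define \<Phi>' where "\<Phi>' = (\<lambda>t. ((cos t)^2 - (sin t)^2) * Hf A (ef X B t) +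
        sin t * cos t * (H1 A (ef X B t) * ((X - B) * (2 * sin t * cos t))))"
  have "(\<Phi>' has_integral (\<Phi> (pi/2) - \<Phi> 0)) {0..pi/2}"
  proof (rule fundamental_theorem_of_calculus)
    fix t assume t: "t \<in> {0..pi/2}"
    have e: "0 < ef X B t" "ef X B t < A" using ef_bounds[OF ab] by auto
    have d1: "((\<lambda>t. Hf A (ef X B t)) has_real_derivative H1 A (ef X B t) * ((X - B) * (2 * sin t * cos t))) (at t)"
      by (rule DERIV_chain2[OF Hf_deriv[OF e] ef_dt])
    have d2: "((\<lambda>t. sin t * cos t) has_real_derivative (cos t)^2 - (sin t)^2) (at t)"
      by (auto intro!: derivative_eq_intros simp: power2_eq_square)
    have "(\<Phi> has_real_derivative \<Phi>' t) (at t)"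
      using DERIV_mult'[OF d2 d1] unfolding \<Phi>_def \<Phi>'_def by (simp add: algebra_simps)
    then show "(\<Phi> has_vector_derivative \<Phi>' t) (at t within {0..pi/2})"
      by (simp add: has_real_derivative_iff_has_vector_derivative[symmetric] has_field_derivative_at_within)
  qed simp
  then have hP: "(\<Phi>' has_integral 0) {0..pi/2}" unfolding \<Phi>_def by simp
  have i2: "((\<lambda>t. (sin t)^2 * Hf A (ef X B t)) has_integral P2 A X B) {0..pi/2}"
    unfolding P2_def using ab
    by (intro integrable_integral integrable_continuous_interval cont_w_ef[where A=A] Hf_cont continuous_intros)
  have i3: "((\<lambda>t. (cos t)^2 * Hf A (ef X B t)) has_integral P3 A X B) {0..pi/2}"
    unfolding P3_def using ab
    by (intro integrable_integral integrable_continuous_interval cont_w_ef[where A=A] Hf_cont continuous_intros)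
  have "((\<lambda>t. ((sin t)^2 * Hf A (ef X B t) - (cos t)^2 * Hf A (ef X B t)) + \<Phi>' t) has_integral
          (P2 A X B - P3 A X B + 0)) {0..pi/2}"
    by (intro has_integral_add has_integral_diff i2 i3 hP)
  moreover have "(\<lambda>t. ((sin t)^2 * Hf A (ef X B t) - (cos t)^2 * Hf A (ef X B t)) + \<Phi>' t)
      = (\<lambda>t. (X - B) * (2 * (sin t)^2 * (cos t)^2 * H1 A (ef X B t)))"
    unfolding \<Phi>'_def by (auto simp: algebra_simps power2_eq_square)
  ultimately have "((\<lambda>t. (X - B) * (2 * (sin t)^2 * (cos t)^2 * H1 A (ef X B t))) has_integral
          (P2 A X B - P3 A X B)) {0..pi/2}" by simp
  then have "P2 A X B - P3 A X B = integral {0..pi/2} (\<lambda>t. (X - B) * (2 * (sin t)^2 * (cos t)^2 * H1 A (ef X B t)))"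
    by (rule integral_unique[symmetric])
  also have "\<dots> = (X - B) * Q A X B" unfolding Q_def by simp
  finally show ?thesis .
qed


lemma H1_eq:
  "H1 A x = (4 * x - A) * (A / (2 * (x * sqrt x) * ((A - x)^2 * sqrt (A - x))))"
  unfolding H1_def by simp

lemma H1_fac_pos: "0 < x \<Longrightarrow> x < A \<Longrightarrow> A / (2 * (x * sqrt x) * ((A - x)^2 * sqrt (A - x))) > 0"
  by simp

lemma H1_neg: "0 < x \<Longrightarrow> x < A \<Longrightarrow> 4 * x \<le> A \<Longrightarrow> H1 A x \<le> 0"
  unfolding H1_eq by (intro mult_nonpos_nonneg less_imp_le[OF H1_fac_pos]) auto

lemma H1_negs: "0 < x \<Longrightarrow> x < A \<Longrightarrow> 4 * x < A \<Longrightarrow> H1 A x < 0"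
  unfolding H1_eq by (intro mult_neg_pos H1_fac_pos) auto

lemma H1_poss: "0 < x \<Longrightarrow> x < A \<Longrightarrow> A < 4 * x \<Longrightarrow> H1 A x > 0"
  unfolding H1_eq by (intro mult_pos_pos H1_fac_pos) auto

lemma sin_pi4_sq: "(sin (pi/4))^2 = 1/2"
  by (simp add: sin_45 power_divide)

lemma ef_le_X: "B \<le> X \<Longrightarrow> ef X B t \<le> X"
proof -
  assume "B \<le> X"
  moreover have "(sin t)^2 \<le> 1" by (simp add: abs_square_le_1)
  ultimately have "(X - B) * (sin t)^2 \<le> (X - B) * 1" by (intro mult_left_mono) auto
  then show ?thesis unfolding ef_alt by simp
qed

lemma Q_neg:
  assumes "0<B" "B<X" "X<A" "4*X \<le> A"
  shows "Q A X B < 0"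
proof -
  have ab: "0<B" "B<A" "0<X" "X<A" using assms by auto
  have "integral {0..pi/2} (\<lambda>t. - (2 * (sin t)^2 * (cos t)^2 * H1 A (ef X B t))) > 0"
  proof (rule int_pos[where tt="pi/4"])
    show "continuous_on {0..pi/2} (\<lambda>t. - (2 * (sin t)^2 * (cos t)^2 * H1 A (ef X B t)))"
      using ab by (intro continuous_on_minus cont_w_ef[where A=A] H1_cont continuous_intros) auto
    show "0 \<le> - (2 * (sin t)^2 * (cos t)^2 * H1 A (ef X B t))" for t
    proof -
      have "H1 A (ef X B t) \<le> 0"
        using ef_bounds[OF ab, of t] ef_le_X[of B X t] assms by (intro H1_neg) auto
      then show ?thesis by (simp add: mult_nonneg_nonpos)
    qed
    have e: "ef X B (pi/4) = (B + X) / 2" unfolding ef_alt sin_pi4_sq by (simp add: field_simps)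
    have "H1 A (ef X B (pi/4)) < 0"
      using ef_bounds[OF ab, of "pi/4"] assms unfolding e by (intro H1_negs) auto
    then show "0 < - (2 * (sin (pi/4))^2 * (cos (pi/4))^2 * H1 A (ef X B (pi/4)))"
      using sincos_pi4 by (simp add: mult_pos_neg)
  qed auto
  then show ?thesis unfolding Q_def by (simp add: integral_neg)
qed

lemma pw_alg: fixes S H sc :: real assumes "sc \<noteq> 1"
  shows "S * S * H - (1 - S) * S * H = (1 / (1 - sc)) * (S * (S - sc) * H) + ((2 * sc - 1) / (2 * (1 - sc))) * (2 * S * (1 - S) * H)"
proof -
  define d where "d = 1 - sc"
  have d: "d \<noteq> 0" "sc = 1 - d" using assms unfolding d_def by auto
  show ?thesis unfolding d(2) using d(1) by (simp add: field_simps)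
qed

lemma Rd_pos:
  assumes B: "0<B" "4*B < A" and X: "A < 4*X" "X < A" and Q0: "Q A X B = 0"
  shows "R2 A X B - R3 A X B > 0"
proof -
  have ab: "0<B" "B<A" "0<X" "X<A" using assms by auto
  have BX: "B < X" using assms by simp
  define sc where "sc = (A/4 - B) / (X - B)"
  have sc0: "0 < sc" "sc < 1" using assms BX unfolding sc_def by (auto simp: field_simps)
  define k where "k = 1 / (1 - sc)"
  define \<beta> where "\<beta> = (2 * sc - 1) / (2 * (1 - sc))"
  define v where "v = (\<lambda>t. (sin t)^2 * ((sin t)^2 - sc) * H1 A (ef X B t))"
  define q where "q = (\<lambda>t. 2 * (sin t)^2 * (cos t)^2 * H1 A (ef X B t))"
  have cv: "continuous_on {0..pi/2} v"
    unfolding v_def using ab by (intro cont_w_ef[where A=A] H1_cont continuous_intros) auto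
  have cq: "continuous_on {0..pi/2} q"
    unfolding q_def using ab by (intro cont_w_ef[where A=A] H1_cont continuous_intros) auto
  have efsc: "ef X B t - A/4 = (X - B) * ((sin t)^2 - sc)" for t
    unfolding ef_alt sc_def using BX by (simp add: field_simps)
  have V: "integral {0..pi/2} v > 0"
  proof (rule int_pos[where tt="pi/2"])
    show "continuous_on {0..pi/2} v" by (rule cv)
    show "0 \<le> v t" for t
    proof -
      have e: "0 < ef X B t" "ef X B t < A" using ef_bounds[OF ab] by auto
      define F where "F = A / (2 * (ef X B t * sqrt (ef X B t)) * ((A - ef X B t)^2 * sqrt (A - ef X B t)))"
      have F0: "F > 0" unfolding F_def using H1_fac_pos[OF e] .
      have l: "4 * ef X B t - A = 4 * ((X - B) * ((sin t)^2 - sc))" using efsc[of t] by linarith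
      have "v t = (sin t)^2 * ((sin t)^2 - sc) * ((4 * ef X B t - A) * F)"
        unfolding v_def H1_eq F_def by simp
      also have "\<dots> = 4 * (X - B) * ((sin t)^2 * ((sin t)^2 - sc)^2) * F"
        unfolding l by (simp add: power2_eq_square algebra_simps)
      also have "\<dots> \<ge> 0" using BX F0 by (intro mult_nonneg_nonneg) auto
      finally show ?thesis .
    qed
    have "ef X B (pi/2) = X" unfolding ef_alt by simp
    then have "H1 A (ef X B (pi/2)) > 0" using ab X by (simp add: H1_poss)
    then show "0 < v (pi/2)" unfolding v_def using sc0 by simp
  qed (use pi_gt_zero in auto)
  have pw: "(sin t)^2 * (sin t)^2 * H1 A (ef X B t) - (cos t)^2 * (sin t)^2 * H1 A (ef X B t)
      = k * v t + \<beta> * q t" for t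
  proof -
    have c2: "(cos t)^2 = 1 - (sin t)^2" by (simp add: cos_squared_eq)
    have "sc \<noteq> 1" using sc0 by simp
    from pw_alg[OF this, of "(sin t)^2" "H1 A (ef X B t)"]
    show ?thesis unfolding v_def q_def k_def \<beta>_def c2 by (simp add: mult_ac)
  qed
  have i2: "(\<lambda>t. (sin t)^2 * (sin t)^2 * H1 A (ef X B t)) integrable_on {0..pi/2}"
    using ab by (intro integrable_continuous_interval cont_w_ef[where A=A] H1_cont continuous_intros) auto
  have i3: "(\<lambda>t. (cos t)^2 * (sin t)^2 * H1 A (ef X B t)) integrable_on {0..pi/2}"
    using ab by (intro integrable_continuous_interval cont_w_ef[where A=A] H1_cont continuous_intros) auto
  have iv: "v integrable_on {0..pi/2}" using cv by (rule integrable_continuous_interval)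
  have iq: "q integrable_on {0..pi/2}" using cq by (rule integrable_continuous_interval)
  have "R2 A X B - R3 A X B = integral {0..pi/2} (\<lambda>t. (sin t)^2 * (sin t)^2 * H1 A (ef X B t) - (cos t)^2 * (sin t)^2 * H1 A (ef X B t))"
    unfolding R2_def R3_def by (rule integral_diff[OF i2 i3, symmetric])
  also have "\<dots> = integral {0..pi/2} (\<lambda>t. k * v t + \<beta> * q t)" by (simp only: pw)
  also have "\<dots> = k * integral {0..pi/2} v + \<beta> * integral {0..pi/2} q"
    by (intro integral_unique has_integral_add has_integral_mult_right integrable_integral iv iq)
  also have "integral {0..pi/2} q = 0" using Q0 unfolding Q_def q_def by simp
  finally have "R2 A X B - R3 A X B = k * integral {0..pi/2} v" by simp
  moreover have "k > 0" using sc0 unfolding k_def by simp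
  ultimately show ?thesis using V by simp
qed


lemma cos_lip: "\<bar>cos x - cos y\<bar> \<le> \<bar>x - y\<bar>" for x y :: real
proof -
  have "\<bar>cos x - cos y\<bar> = 2 * \<bar>sin ((x + y) / 2)\<bar> * \<bar>sin ((y - x) / 2)\<bar>"
    unfolding cos_diff_cos by (simp add: abs_mult)
  also have "\<dots> \<le> 2 * 1 * \<bar>(y - x) / 2\<bar>"
    by (intro mult_mono abs_sin_x_le_abs_x abs_sin_le_one) auto
  finally show ?thesis by simp
qed

lemma H1_lower_bnd:
  assumes "0 < A" "A/2 \<le> x" "x < A" "A - x \<le> d"
  shows "H1 A x \<ge> A * A / (2 * (A * sqrt A) * (d^2 * sqrt d))"
  unfolding H1_def
proof (rule frac_le)
  show "0 \<le> A * (4 * x - A)" using assms by simp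
  show "A * A \<le> A * (4 * x - A)" using assms by (intro mult_left_mono) auto
  show "0 < 2 * (x * sqrt x) * ((A - x)^2 * sqrt (A - x))" using assms by simp
  show "2 * (x * sqrt x) * ((A - x)^2 * sqrt (A - x)) \<le> 2 * (A * sqrt A) * (d^2 * sqrt d)"
    using assms by (intro mult_left_mono mult_mono power_mono real_sqrt_le_mono) auto
qed

lemma H1_lower_const:
  assumes "0 < B" "4 * B < A"
  shows "\<exists>M\<ge>0. \<forall>x. B \<le> x \<longrightarrow> x < A \<longrightarrow> H1 A x \<ge> - M"
proof -
  have "continuous_on {B..A/4} (H1 A)"
    by (rule continuous_on_subset[OF H1_cont]) (use assms in auto)
  from continuous_attains_inf[OF compact_Icc _ this] assms
  obtain x0 where x0: "\<forall>y\<in>{B..A/4}. H1 A x0 \<le> H1 A y" by auto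
  show ?thesis
  proof (intro exI[of _ "max 0 (- H1 A x0)"] conjI allI impI)
    fix x assume x: "B \<le> x" "x < A"
    show "H1 A x \<ge> - max 0 (- H1 A x0)"
    proof (cases "4 * x \<le> A")
      case True
      then have "x \<in> {B..A/4}" using x by auto
      then have "H1 A x0 \<le> H1 A x" using x0 by blast
      then show ?thesis by linarith
    next
      case False then have "H1 A x > 0" using x assms by (intro H1_poss) auto
      then show ?thesis by simp
    qed
  qed simp
qed

lemma int_lower:
  fixes f :: "real \<Rightarrow> real"
  assumes "f integrable_on {a..b}" "a \<le> b" "\<And>t. t \<in> {a..b} \<Longrightarrow> c \<le> f t"
  shows "(b - a) * c \<le> integral {a..b} f"
  using integral_le[of "\<lambda>t. c" "{a..b}" f] assms by (simp add: integrable_const_ivl)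


lemma Q_exists_pos:
  assumes B: "0 < B" "4 * B < A"
  shows "\<exists>X. B < X \<and> X < A \<and> Q A X B > 0"
proof -
  have A0: "A > 0" using B by simp
  obtain M where M0: "M \<ge> 0" and M: "\<And>x. B \<le> x \<Longrightarrow> x < A \<Longrightarrow> H1 A x \<ge> - M"
    using H1_lower_const[OF B] by blast
  define K where "K = 1 + 9 * A"
  have K0: "K > 0" "K \<ge> 1" unfolding K_def using A0 by auto
  define C where "C = A * A / (2 * (A * sqrt A) * (K^2 * sqrt K))"
  have C0: "C > 0" unfolding C_def using A0 K0 by simp
  define \<rho> where "\<rho> = min (min ((A - B) / 2) (A / (2 * K))) (C / (M * pi + 1))"
  have \<rho>0: "\<rho> > 0" unfolding \<rho>_def using B K0 C0 M0 by (auto intro!: divide_pos_pos add_nonneg_pos)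
  define r where "r = min (1/6) (sqrt \<rho>)"
  have r0: "r > 0" "r \<le> 1/6" unfolding r_def using \<rho>0 by auto
  have "r^2 \<le> (sqrt \<rho>)^2" unfolding r_def using \<rho>0 by (intro power_mono) auto
  then have r2: "r^2 \<le> \<rho>" using \<rho>0 by simp
  have r2a: "r^2 < A - B" using r2 B unfolding \<rho>_def by auto
  have r2b: "r^2 * K \<le> A / 2" using r2 K0 unfolding \<rho>_def by (auto simp: field_simps)
  have r2c: "M * pi * r^2 < C"
  proof -
    have "r^2 \<le> C / (M * pi + 1)" using r2 unfolding \<rho>_def by auto
    moreover have den: "M * pi + 1 > 0" using M0 by (simp add: add_nonneg_pos)
    ultimately have "r^2 * (M * pi + 1) \<le> C" by (simp add: pos_le_divide_eq)
    moreover have "r^2 > 0" using r0 by simp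
    moreover have "r^2 * (M * pi + 1) = M * pi * r^2 + r^2" by (simp add: algebra_simps)
    ultimately show ?thesis by linarith
  qed
  define X where "X = A - r^2"
  have X: "B < X" "X < A" "0 < X" using r2a r0 B unfolding X_def by auto
  have ab: "0<B" "B<A" "0<X" "X<A" using X B by auto
  define t0 where "t0 = arccos (2 * r)"
  have t0: "0 \<le> t0" "t0 \<le> pi/2" "cos t0 = 2 * r"
    unfolding t0_def using r0 arccos_le_pi2[of "2 * r"] by (auto intro!: arccos_lbound)
  have cosT: "r \<le> cos t \<and> cos t \<le> 3 * r" if "t0 \<le> t" "t \<le> t0 + r" for t
    using cos_lip[of t t0] that t0 by auto
  have t1: "t0 + r \<le> pi/2"
  proof (rule ccontr)
    assume "\<not> t0 + r \<le> pi/2"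
    then have "r \<le> cos (pi/2)" using cosT[of "pi/2"] t0 by auto
    then show False using r0 by simp
  qed
  define q where "q = (\<lambda>t. 2 * (sin t)^2 * (cos t)^2 * H1 A (ef X B t))"
  have iq: "q integrable_on {0..pi/2}" unfolding q_def
    using ab by (intro integrable_continuous_interval cont_w_ef[where A=A] H1_cont continuous_intros) auto
  have qlow: "q t \<ge> - 2 * M" for t
  proof -
    have e: "0 < ef X B t" "ef X B t < A" using ef_bounds[OF ab] by auto
    have eB: "B \<le> ef X B t" unfolding ef_alt using X by simp
    have w0: "0 \<le> 2 * (sin t)^2 * (cos t)^2" by simp
    have w2: "2 * (sin t)^2 * (cos t)^2 \<le> 2"
    proof -
      have "(sin t)^2 * (cos t)^2 \<le> 1 * 1"
        by (intro mult_mono) (auto simp: abs_square_le_1)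
      then show ?thesis by simp
    qed
    have H: "H1 A (ef X B t) \<ge> - M" using M[OF eB e(2)] .
    show ?thesis
    proof (cases "H1 A (ef X B t) \<ge> 0")
      case True then show ?thesis unfolding q_def using w0 M0
        by (smt (verit) mult_nonneg_nonneg)
    next
      case False
      have "(2 * (sin t)^2 * (cos t)^2 - 2) * H1 A (ef X B t) \<ge> 0"
        using False w2 by (intro mult_nonpos_nonpos) auto
      then have "q t \<ge> 2 * H1 A (ef X B t)" unfolding q_def by (simp add: algebra_simps)
      then show ?thesis using H by simp
    qed
  qed
  have qT: "q t \<ge> C / r^3" if t: "t0 \<le> t" "t \<le> t0 + r" for t
  proof -
    have c: "r \<le> cos t" "cos t \<le> 3 * r" using cosT[OF t] by auto
    have c2: "r^2 \<le> (cos t)^2" "(cos t)^2 \<le> 9 * r^2"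
      using c r0 power_mono[of r "cos t" 2] power_mono[of "cos t" "3 * r" 2] by (auto simp: power_mult_distrib)
    have s2: "(sin t)^2 \<ge> 1/2"
    proof -
      have "(sin t)^2 = 1 - (cos t)^2" by (simp add: sin_squared_eq)
      moreover have "9 * r^2 \<le> 9 * (1/6)^2" using r0 by (intro mult_left_mono power_mono) auto
      ultimately show ?thesis using c2 by (simp add: power2_eq_square)
    qed
    have efc: "ef X B t = X - (X - B) * (cos t)^2"
      unfolding ef_alt by (simp add: sin_squared_eq algebra_simps)
    have d1: "A - ef X B t \<le> r^2 * K"
    proof -
      have "(X - B) * (cos t)^2 \<le> A * (9 * r^2)"
        using X B c2 by (intro mult_mono) auto
      moreover have "A - ef X B t = r^2 + (X - B) * (cos t)^2" using efc unfolding X_def by simp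
      moreover have "r^2 * K = r^2 + A * (9 * r^2)" by (simp add: K_def algebra_simps)
      ultimately show ?thesis by linarith
    qed
    have e: "0 < ef X B t" "ef X B t < A" using ef_bounds[OF ab] by auto
    have eA: "A / 2 \<le> ef X B t" using d1 r2b by simp
    have H: "H1 A (ef X B t) \<ge> A * A / (2 * (A * sqrt A) * ((r^2 * K)^2 * sqrt (r^2 * K)))"
      by (rule H1_lower_bnd[OF A0 eA e(2) d1])
    have eq: "(r^2 * K)^2 * sqrt (r^2 * K) = r^5 * (K^2 * sqrt K)"
      using r0 K0 by (simp add: real_sqrt_mult power_mult_distrib algebra_simps numeral_eq_Suc)
    have eq2: "C / r^5 = A * A / (2 * (A * sqrt A) * (r^5 * (K^2 * sqrt K)))"
      unfolding C_def by (simp add: divide_divide_eq_left mult_ac)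
    have H': "H1 A (ef X B t) \<ge> C / r^5" using H unfolding eq eq2 .
    have "C / r^3 = 2 * (1/2) * r^2 * (C / r^5)" using r0 by (simp add: field_simps numeral_eq_Suc)
    also have "\<dots> \<le> 2 * (sin t)^2 * (cos t)^2 * H1 A (ef X B t)"
      using s2 c2 H' C0 r0 by (intro mult_mono mult_left_mono) auto
    finally show ?thesis unfolding q_def .
  qed
  have I0: "integral {0..t0} q + integral {t0..pi/2} q = integral {0..pi/2} q"
    using t0 iq by (intro Henstock_Kurzweil_Integration.integral_combine) auto
  have iq2: "q integrable_on {t0..pi/2}" by (rule integrable_on_subinterval[OF iq]) (use t0 in auto)
  have I1: "integral {t0..t0+r} q + integral {t0+r..pi/2} q = integral {t0..pi/2} q"
    using t1 r0 iq2 by (intro Henstock_Kurzweil_Integration.integral_combine) auto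
  have L1: "(t0 - 0) * (- 2 * M) \<le> integral {0..t0} q"
    using iq t0 qlow by (intro int_lower integrable_on_subinterval[OF iq]) (auto simp del: mult_minus_left)
  have L2: "(t0 + r - t0) * (C / r^3) \<le> integral {t0..t0+r} q"
    using iq t0 t1 r0 qT by (intro int_lower integrable_on_subinterval[OF iq]) (auto simp del: mult_minus_left)
  have L3: "(pi/2 - (t0 + r)) * (- 2 * M) \<le> integral {t0+r..pi/2} q"
    using iq t0 t1 r0 qlow by (intro int_lower integrable_on_subinterval[OF iq]) (auto simp del: mult_minus_left)
  have QI: "Q A X B = integral {0..pi/2} q" unfolding Q_def q_def ..
  have r3: "r * (C / r^3) = C / r^2" using r0 by (simp add: power2_eq_square power3_eq_cube)
  have L2': "C / r^2 \<le> integral {t0..t0+r} q" using L2 r3 by simp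
  have ex: "t0 * (- 2 * M) + (pi/2 - (t0 + r)) * (- 2 * M) = - (M * pi) + 2 * M * r"
    by (simp add: algebra_simps)
  have L1': "t0 * (- 2 * M) \<le> integral {0..t0} q" using L1 by simp
  have low: "Q A X B \<ge> - (M * pi) + 2 * M * r + C / r^2"
    using QI I0 I1 L1' L2' L3 ex by linarith
  have r2p: "r^2 > 0" using r0 by simp
  have Cr: "M * pi < C / r^2" using r2c r2p by (simp add: pos_less_divide_eq)
  have "2 * M * r \<ge> 0" using M0 r0 by simp
  then have "Q A X B > 0" using low Cr by linarith
  then show ?thesis using X by blast
qed


lemma sign_right:
  fixes f f' :: "real \<Rightarrow> real"
  assumes der: "\<And>x. lo < x \<Longrightarrow> x < hi \<Longrightarrow> (f has_real_derivative f' x) (at x)"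
    and zpos: "\<And>x. lo < x \<Longrightarrow> x < hi \<Longrightarrow> f x = 0 \<Longrightarrow> f' x > 0"
    and z: "lo < z" "z < hi" "f z = 0"
  shows "\<forall>x. z < x \<and> x < hi \<longrightarrow> f x > 0"
proof -
  have cont: "continuous_on {a..b} f" if "lo < a" "b < hi" for a b
  proof (rule continuous_at_imp_continuous_on, rule ballI)
    fix x assume "x \<in> {a..b}"
    then have "lo < x" "x < hi" using that by auto
    then show "isCont f x" using der by (blast intro: DERIV_isCont)
  qed
  have neg: False if y: "z < y" "y < hi" "f y < 0" for y
  proof -
    define Z where "Z = {x \<in> {z..y}. f x = 0}"
    have cZ: "closed Z" unfolding Z_def
      by (rule continuous_closed_preimage_constant[OF cont]) (use z y in auto)
    have "z \<in> Z" unfolding Z_def using z y by auto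
    then have nZ: "Z \<noteq> {}" by auto
    have bZ: "bdd_above Z" unfolding Z_def by (rule bdd_aboveI[of _ y]) auto
    define m where "m = Sup Z"
    have mZ: "m \<in> Z" unfolding m_def by (rule closed_contains_Sup[OF nZ bZ cZ])
    have mub: "x \<le> m" if "x \<in> Z" for x unfolding m_def by (rule cSup_upper[OF that bZ])
    have m: "z \<le> m" "m \<le> y" "f m = 0" using mZ unfolding Z_def by auto
    have my: "m < y" using m y by (cases "m = y") auto
    have "f' m > 0" using zpos[of m] m z y by auto
    from DERIV_pos_inc_right[OF der this] m z y
    obtain d where d: "d > 0" "\<And>h. h > 0 \<Longrightarrow> h < d \<Longrightarrow> f m < f (m + h)" by auto
    define hh where "hh = min d (y - m)"
    define x1 where "x1 = m + hh / 2"
    have mn: "hh \<le> y - m" "hh > 0" "hh \<le> d" using d(1) my unfolding hh_def by auto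
    have x1a: "m < x1" using mn unfolding x1_def by linarith
    have x1b: "x1 < y" using mn unfolding x1_def by linarith
    note x1 = x1a x1b
    have "f x1 > 0" using d(2)[of "hh / 2"] mn m unfolding x1_def by auto
    from IVT2'[of f y 0 x1, OF _ _ _ cont] x1 y z m
    obtain x2 where x2: "x1 \<le> x2" "x2 \<le> y" "f x2 = 0" using \<open>f x1 > 0\<close> by fastforce
    then have "x2 \<in> Z" unfolding Z_def using x1 m by auto
    then show False using mub x2 x1 by fastforce
  qed
  show ?thesis
  proof (intro allI impI)
    fix y assume y: "z < y \<and> y < hi"
    show "f y > 0"
    proof (rule ccontr)
      assume "\<not> f y > 0"
      then consider "f y < 0" | "f y = 0" by linarith
      then show False
      proof cases
        case 1 then show False using neg y by auto
      next
        case 2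
        have "f' y > 0" using zpos[of y] y z 2 by auto
        from DERIV_pos_inc_left[OF der this] y z
        obtain d where d: "d > 0" "\<And>h. h > 0 \<Longrightarrow> h < d \<Longrightarrow> f (y - h) < f y" by auto
        define hh where "hh = min d (y - z)"
        define y' where "y' = y - hh / 2"
        have mn: "hh \<le> y - z" "hh > 0" "hh \<le> d" using d(1) y unfolding hh_def by auto
        have "f y' < 0" using d(2)[of "hh / 2"] mn 2 unfolding y'_def by auto
        moreover have "z < y'" using mn y unfolding y'_def by linarith
        moreover have "y' < hi" using mn y unfolding y'_def by linarith
        ultimately show False using neg by auto
      qed
    qed
  qed
qed

lemma sign_pattern:
  fixes f f' :: "real \<Rightarrow> real"
  assumes der: "\<And>x. lo < x \<Longrightarrow> x < hi \<Longrightarrow> (f has_real_derivative f' x) (at x)"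
    and zpos: "\<And>x. lo < x \<Longrightarrow> x < hi \<Longrightarrow> f x = 0 \<Longrightarrow> f' x > 0"
    and z: "lo < z" "z < hi" "f z = 0"
  shows "\<forall>x. z < x \<and> x < hi \<longrightarrow> f x > 0" "\<forall>x. lo < x \<and> x < z \<longrightarrow> f x < 0"
proof -
  show "\<forall>x. z < x \<and> x < hi \<longrightarrow> f x > 0" by (rule sign_right[OF der zpos z])
  have der': "((\<lambda>x. - f (- x)) has_real_derivative f' (- x)) (at x)" if "- hi < x" "x < - lo" for x
  proof -
    have "((\<lambda>x. f (- x)) has_real_derivative f' (- x) * (- 1)) (at x)"
      by (rule DERIV_chain2[OF der]) (use that in \<open>auto intro!: derivative_eq_intros\<close>)
    then show ?thesis using DERIV_minus by fastforce
  qed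
  have "\<forall>x. - z < x \<and> x < - lo \<longrightarrow> - f (- x) > 0"
    by (rule sign_right[of "-hi" "-lo" "\<lambda>x. - f (- x)" "\<lambda>x. f' (- x)", OF der'])
       (use zpos z in auto)
  then show "\<forall>x. lo < x \<and> x < z \<longrightarrow> f x < 0"
    by (metis minus_less_iff minus_minus neg_0_less_iff_less)
qed


lemma shift_chain:
  assumes "(g has_real_derivative D) (at (u + \<nu>))"
  shows "((\<lambda>u. g (u + \<nu>)) has_real_derivative D) (at u)"
proof -
  have l: "((\<lambda>x. x + \<nu>) has_real_derivative 1) (at u)" by (auto intro!: derivative_eq_intros)
  show ?thesis using DERIV_chain2[OF assms l] by simp
qed

lemma lamdiff_eq:
  assumes "0 < b + \<nu>" "b < u" "u < a"
  shows "lam 2 \<nu> a u b - lam 3 \<nu> a u b =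
     (J (a+\<nu>) (u+\<nu>) (b+\<nu>) / (P2 (a+\<nu>) (u+\<nu>) (b+\<nu>) * P3 (a+\<nu>) (u+\<nu>) (b+\<nu>))) *
     (P2 (a+\<nu>) (u+\<nu>) (b+\<nu>) - P3 (a+\<nu>) (u+\<nu>) (b+\<nu>))"
proof -
  have ab: "0 < b+\<nu>" "b+\<nu> < a+\<nu>" "0 < u+\<nu>" "u+\<nu> < a+\<nu>" using assms by auto
  have p2: "P2 (a+\<nu>) (u+\<nu>) (b+\<nu>) > 0" by (rule P2_pos[OF ab])
  have p3: "P3 (a+\<nu>) (u+\<nu>) (b+\<nu>) > 0" by (rule P3_pos[OF ab])
  show ?thesis unfolding lam_def Iint_eq[OF assms] dI2_eq[OF assms] dI3_eq[OF assms]
    using p2 p3 by (simp add: field_simps)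
qed

theorem lemma4p4:
  fixes \<nu> a b :: real
  assumes "0 < b + \<nu>" and "b + \<nu> < (a + \<nu>) / 4"
  shows "\<exists>ustar. b < ustar \<and> ustar < a
     \<and> lam 2 \<nu> a ustar b - lam 3 \<nu> a ustar b = 0
     \<and> (\<forall>u. b < u \<and> u < a \<and> lam 2 \<nu> a u b - lam 3 \<nu> a u b = 0 \<longrightarrow> u = ustar)
     \<and> (\<exists>D. ((\<lambda>u. lam 2 \<nu> a u b - lam 3 \<nu> a u b) has_real_derivative D) (at ustar) \<and> D \<noteq> 0)
     \<and> (\<forall>u. ustar < u \<and> u < a \<longrightarrow> lam 2 \<nu> a u b - lam 3 \<nu> a u b > 0)
     \<and> (\<forall>u. b < u \<and> u < ustar \<longrightarrow> lam 2 \<nu> a u b - lam 3 \<nu> a u b < 0)"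
proof -
  define A where "A = a + \<nu>"
  define B where "B = b + \<nu>"
  have B0: "0 < B" "4 * B < A" using assms unfolding A_def B_def by auto
  have ba: "b < a" using assms by simp
  have inr: "0 < B" "B < A" "0 < u + \<nu>" "u + \<nu> < A" if "b < u" "u < a" for u
    using that B0 unfolding A_def B_def by auto
  define \<phi> where "\<phi> = (\<lambda>u. P2 A (u + \<nu>) B - P3 A (u + \<nu>) B)"
  define \<phi>' where "\<phi>' = (\<lambda>u. R2 A (u + \<nu>) B - R3 A (u + \<nu>) B)"
  have der: "(\<phi> has_real_derivative \<phi>' u) (at u)" if "b < u" "u < a" for u
    unfolding \<phi>_def \<phi>'_def
    by (intro DERIV_diff shift_chain P2_dX P3_dX inr[OF that])
  have phiQ: "\<phi> u = (u + \<nu> - B) * Q A (u + \<nu>) B" if "b < u" "u < a" for u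
    unfolding \<phi>_def by (rule P_diff[OF inr[OF that]])
  have zpos: "\<phi>' u > 0" if u: "b < u" "u < a" "\<phi> u = 0" for u
  proof -
    have uB: "u + \<nu> - B > 0" using u unfolding B_def by simp
    have Q0: "Q A (u + \<nu>) B = 0" using phiQ[OF u(1,2)] u(3) uB by simp
    have "A < 4 * (u + \<nu>)"
    proof (rule ccontr)
      assume "\<not> A < 4 * (u + \<nu>)"
      then have "Q A (u + \<nu>) B < 0" using u B0 unfolding A_def B_def by (intro Q_neg) auto
      then show False using Q0 by simp
    qed
    then show ?thesis unfolding \<phi>'_def using Rd_pos[OF B0 _ _ Q0] inr[OF u(1,2)] by auto
  qed
  obtain X1 where X1: "B < X1" "X1 < A" "Q A X1 B > 0" using Q_exists_pos[OF B0] by blast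
  have X1a: "A < 4 * X1"
  proof (rule ccontr)
    assume "\<not> A < 4 * X1"
    then have "Q A X1 B < 0" using X1 B0 by (intro Q_neg) auto
    then show False using X1 by simp
  qed
  define u1 where "u1 = X1 - \<nu>"
  have u1: "b < u1" "u1 < a" using X1 unfolding u1_def A_def B_def by auto
  have phi1: "\<phi> u1 > 0" using phiQ[OF u1] X1 unfolding u1_def by simp
  define u0 where "u0 = (B + A / 4) / 2 - \<nu>"
  have u0a: "b < u0" using assms X1a X1 unfolding u0_def u1_def A_def B_def by (auto simp: field_simps)
  have u0b: "u0 < a" using assms X1a X1 unfolding u0_def u1_def A_def B_def by (auto simp: field_simps)
  have u0c: "u0 < u1" using assms X1a X1 unfolding u0_def u1_def A_def B_def by (auto simp: field_simps)
  note u0 = u0a u0b u0c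
  have phi0: "\<phi> u0 < 0"
  proof -
    have "Q A (u0 + \<nu>) B < 0" using B0 unfolding u0_def by (intro Q_neg) auto
    moreover have "u0 + \<nu> - B > 0" using B0 unfolding u0_def by simp
    ultimately show ?thesis using phiQ[OF u0(1,2)] by (simp add: mult_pos_neg)
  qed
  have cont: "continuous_on {u0..u1} \<phi>"
  proof (rule continuous_at_imp_continuous_on, rule ballI)
    fix x assume "x \<in> {u0..u1}"
    then have "b < x" "x < a" using u0 u1 by auto
    then show "isCont \<phi> x" using der by (blast intro: DERIV_isCont)
  qed
  obtain us where us: "u0 \<le> us" "us \<le> u1" "\<phi> us = 0"
    using IVT'[of \<phi> u0 0 u1, OF _ _ _ cont] phi0 phi1 u0 by force
  have usi: "b < us" "us < a" using us u0 u1 by auto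
  note sp = sign_pattern[of b a \<phi> \<phi>', OF der zpos usi us(3)]
  define L where "L = (\<lambda>u. lam 2 \<nu> a u b - lam 3 \<nu> a u b)"
  define fac where "fac = (\<lambda>u. J A (u + \<nu>) B / (P2 A (u + \<nu>) B * P3 A (u + \<nu>) B))"
  have Leq: "L u = fac u * \<phi> u" if "b < u" "u < a" for u
    unfolding L_def fac_def \<phi>_def A_def B_def using lamdiff_eq[OF assms(1) that] by (simp add: add.commute)
  have facpos: "fac u > 0" if "b < u" "u < a" for u
    unfolding fac_def using J_pos[OF inr[OF that]] P2_pos[OF inr[OF that]] P3_pos[OF inr[OF that]] by simp
  have Lzero: "L u = 0 \<longleftrightarrow> \<phi> u = 0" if "b < u" "u < a" for u
    using Leq[OF that] facpos[OF that] by simp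
  have Lpos: "L u > 0 \<longleftrightarrow> \<phi> u > 0" if "b < u" "u < a" for u
    using Leq[OF that] facpos[OF that] by (simp add: zero_less_mult_iff)
  have Lneg: "L u < 0 \<longleftrightarrow> \<phi> u < 0" if "b < u" "u < a" for u
    using Leq[OF that] facpos[OF that] by (simp add: mult_less_0_iff)
  define Jf where "Jf = (\<lambda>u. J A (u + \<nu>) B)"
  define p2 where "p2 = (\<lambda>u. P2 A (u + \<nu>) B)"
  define p3 where "p3 = (\<lambda>u. P3 A (u + \<nu>) B)"
  define r2 where "r2 = (\<lambda>u. R2 A (u + \<nu>) B)"
  define r3 where "r3 = (\<lambda>u. R3 A (u + \<nu>) B)"
  have dJ: "(Jf has_real_derivative p2 us) (at us)" unfolding Jf_def p2_def
    by (intro shift_chain J_dX inr[OF usi])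
  have dp2: "(p2 has_real_derivative r2 us) (at us)" unfolding r2_def p2_def
    by (intro shift_chain P2_dX inr[OF usi])
  have dp3: "(p3 has_real_derivative r3 us) (at us)" unfolding r3_def p3_def
    by (intro shift_chain P3_dX inr[OF usi])
  have p2pos: "p2 us > 0" unfolding p2_def by (rule P2_pos[OF inr[OF usi]])
  have p3pos: "p3 us > 0" unfolding p3_def by (rule P3_pos[OF inr[OF usi]])
  have Jpos: "Jf us > 0" unfolding Jf_def by (rule J_pos[OF inr[OF usi]])
  define D where "D = (p2 us * p3 us - Jf us * r3 us) / (p3 us * p3 us) - (p2 us * p2 us - Jf us * r2 us) / (p2 us * p2 us)"
  have dL': "((\<lambda>u. Jf u / p3 u - Jf u / p2 u) has_real_derivative D) (at us)"
    unfolding D_def using p2pos p3pos by (intro DERIV_diff DERIV_divide dJ dp2 dp3) auto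
  have dL: "(L has_real_derivative D) (at us)"
  proof (rule has_field_derivative_transform_within_open[OF dL', of "{b<..<a}"])
    fix u assume u: "u \<in> {b<..<a}"
    then have "L u = fac u * \<phi> u" using Leq by auto
    also have "\<dots> = Jf u / p3 u - Jf u / p2 u"
    proof -
      have "p2 u > 0" "p3 u > 0" unfolding p2_def p3_def using P2_pos P3_pos inr u by auto
      then show ?thesis unfolding fac_def \<phi>_def Jf_def p2_def p3_def by (simp add: field_simps)
    qed
    finally show "Jf u / p3 u - Jf u / p2 u = L u" by simp
  qed (use usi in auto)
  have eq23: "p2 us = p3 us" using us(3) unfolding \<phi>_def p2_def p3_def by simp
  have rpos: "r2 us - r3 us > 0" using zpos[OF usi us(3)] unfolding \<phi>'_def r2_def r3_def by simp
  have "D = Jf us * (r2 us - r3 us) / (p2 us * p2 us)"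
    unfolding D_def eq23 using p3pos by (simp add: field_simps)
  then have Dne: "D \<noteq> 0" using Jpos rpos p2pos by simp
  show ?thesis
  proof (rule exI[of _ us], intro conjI allI impI)
    show "b < us" "us < a" by (rule usi)+
    show "lam 2 \<nu> a us b - lam 3 \<nu> a us b = 0" using Lzero[OF usi] us(3) unfolding L_def by simp
    show "\<exists>D. ((\<lambda>u. lam 2 \<nu> a u b - lam 3 \<nu> a u b) has_real_derivative D) (at us) \<and> D \<noteq> 0"
      using dL Dne unfolding L_def by blast
  next
    fix u assume u: "b < u \<and> u < a \<and> lam 2 \<nu> a u b - lam 3 \<nu> a u b = 0"
    then have p0: "\<phi> u = 0" using Lzero[of u] unfolding L_def by simp
    show "u = us"
    proof (rule ccontr)
      assume "u \<noteq> us"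
      then consider "u < us" | "us < u" by linarith
      then show False
      proof cases
        case 1 then have "\<phi> u < 0" using sp(2) u by blast
        then show False using p0 by simp
      next
        case 2 then have "\<phi> u > 0" using sp(1) u by blast
        then show False using p0 by simp
      qed
    qed
  next
    fix u assume u: "us < u \<and> u < a"
    have "\<phi> u > 0" using sp(1) u by blast
    moreover have "b < u" "u < a" using u usi by auto
    ultimately show "lam 2 \<nu> a u b - lam 3 \<nu> a u b > 0" using Lpos[of u] unfolding L_def by blast
  next
    fix u assume u: "b < u \<and> u < us"
    have "\<phi> u < 0" using sp(2) u by blast
    moreover have "b < u" "u < a" using u usi by auto
    ultimately show "lam 2 \<nu> a u b - lam 3 \<nu> a u b < 0" using Lneg[of u] unfolding L_def by blast
  qed
qed

end
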